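(* Let $(M,\phi,\xi,\eta,g)$ be a $(2n+1)$-dimensional almost contact metric manifold and $(\bar M,\bar J,\bar g)$ the corresponding almost Hermitian manifold on $M\times\mathbb R$. Then $\bar R(\bar X,\bar Y,\bar Z,\bar W)=\bar R(\bar J\bar X,\bar J\bar Y,\bar J\bar Z,\bar J\bar W)$ for all vector fields $\bar X,\bar Y,\bar Z,\bar W$ on $\bar M$ if and only if, for all indices $i,j,k,l$, the following hold: $$R_{ijkl}-\phi_i{}^a\phi_j{}^b\phi_k{}^c\phi_l{}^dR_{abcd}=g_{il}\eta_j\eta_k+g_{jk}\eta_i\eta_l-g_{ik}\eta_j\eta_l-g_{jl}\eta_i\eta_k,$$ $$\xi^a\phi_j{}^b\phi_k{}^c\phi_l{}^dR_{abcd}=0,\qquad \xi^a\xi^c\phi_j{}^b\phi_l{}^dR_{abcd}=-g_{jl}+\eta_j\eta_l.$$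
   Context: An almost contact metric manifold $(M,\phi,\xi,\eta,g)$ of dimension $2n+1$: $\phi$ a $(1,1)$-tensor, $\xi$ a vector field, $\eta$ a 1-form, $g$ a Riemannian metric with $\phi^2X=-X+\eta(X)\xi$, $\phi\xi=0$, $\eta\circ\phi=0$, $\eta(\xi)=1$, $g(\phi X,\phi Y)=g(X,Y)-\eta(X)\eta(Y)$, $\eta(X)=g(\xi,X)$. The corresponding almost Hermitian manifold is $\bar M=M\times\mathbb R$ with $\bar JX=\phi X-\eta(X)\partial_t$, $\bar J\partial_t=\xi$, $\bar g(X,Y)=e^{-2t}g(X,Y)$, $\bar g(\partial_t,\partial_t)=e^{-2t}$, $\bar g(X,\partial_t)=0$ for $X,Y$ tangent to $M$. Curvature conventions: $R(X,Y)Z=[\nabla_X,\nabla_Y]Z-\nabla_{[X,Y]}Z$ for the Levi-Civita connection, $\bar R(\bar X,\bar Y,\bar Z,\bar W)=\bar g(\bar R(\bar X,\bar Y)\bar Z,\bar W)$, and in local coordinates on $M$, $R_{ijkl}=g(R(\partial_i,\partial_j)\partial_k,\partial_l)$, $\phi\partial_j=\phi_j{}^i\partial_i$, $\phi_{ij}=g_{aj}\phi_i{}^a$, $\eta_i=g_{ij}\xi^j$, with summation over repeated indices. *)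

theory Defs
  imports "HOL-Analysis.Analysis"
begin

text \<open>Points of a coordinate chart are vectors in real^'i; coordinate index type 'i.
Tensor fields are given by their components in the coordinate frame.\<close>

definition pd :: "(real^'i \<Rightarrow> real) \<Rightarrow> 'i \<Rightarrow> real^'i \<Rightarrow> real" where
  "pd f i x = vector_derivative (\<lambda>s. f (x + s *\<^sub>R axis i 1)) (at 0)"

fun Ck :: "nat \<Rightarrow> (real^'i) set \<Rightarrow> (real^'i \<Rightarrow> real) \<Rightarrow> bool" where
  "Ck 0 U f = continuous_on U f"
| "Ck (Suc k) U f = (continuous_on U f \<and>
      (\<forall>x\<in>U. \<forall>i. (\<lambda>s. f (x + s *\<^sub>R axis i 1)) differentiable (at 0)) \<and>
      (\<forall>i. Ck k U (pd f i)))"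

definition smooth_on :: "(real^'i) set \<Rightarrow> (real^'i \<Rightarrow> real) \<Rightarrow> bool" where
  "smooth_on U f \<longleftrightarrow> (\<forall>k. Ck k U f)"

definition riemannian_metric :: "(real^'i) set \<Rightarrow> (real^'i \<Rightarrow> 'i \<Rightarrow> 'i \<Rightarrow> real) \<Rightarrow> bool" where
  "riemannian_metric U G \<longleftrightarrow> open U \<and>
     (\<forall>a b. smooth_on U (\<lambda>x. G x a b)) \<and>
     (\<forall>x\<in>U. \<forall>a b. G x a b = G x b a) \<and>
     (\<forall>x\<in>U. \<forall>v::real^'i. v \<noteq> 0 \<longrightarrow> (\<Sum>a\<in>UNIV. \<Sum>b\<in>UNIV. v$a * v$b * G x a b) > 0)"

definition ginv :: "(real^'i \<Rightarrow> 'i \<Rightarrow> 'i \<Rightarrow> real) \<Rightarrow> real^'i \<Rightarrow> 'i \<Rightarrow> 'i \<Rightarrow> real" where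
  "ginv G x a b = matrix_inv (\<chi> p q. G x p q) $ a $ b"

text \<open>Christoffel symbols of the first kind: g(nabla_{d_i} d_j, d_k).\<close>
definition chr1 :: "(real^'i \<Rightarrow> 'i \<Rightarrow> 'i \<Rightarrow> real) \<Rightarrow> real^'i \<Rightarrow> 'i \<Rightarrow> 'i \<Rightarrow> 'i \<Rightarrow> real" where
  "chr1 G x i j k = (pd (\<lambda>y. G y j k) i x + pd (\<lambda>y. G y i k) j x - pd (\<lambda>y. G y i j) k x) / 2"

text \<open>Christoffel symbols Gamma^l_{ij}: nabla_{d_i} d_j = Gamma^l_{ij} d_l (Levi-Civita).\<close>
definition chr :: "(real^'i \<Rightarrow> 'i \<Rightarrow> 'i \<Rightarrow> real) \<Rightarrow> real^'i \<Rightarrow> 'i \<Rightarrow> 'i \<Rightarrow> 'i \<Rightarrow> real" where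
  "chr G x l i j = (\<Sum>k\<in>UNIV. ginv G x l k * chr1 G x i j k)"

text \<open>Component along d_l of R(d_i,d_j)d_k = nabla_i nabla_j d_k - nabla_j nabla_i d_k
  (coordinate fields commute).\<close>
definition curv_up :: "(real^'i \<Rightarrow> 'i \<Rightarrow> 'i \<Rightarrow> real) \<Rightarrow> real^'i \<Rightarrow> 'i \<Rightarrow> 'i \<Rightarrow> 'i \<Rightarrow> 'i \<Rightarrow> real" where
  "curv_up G x l i j k =
     pd (\<lambda>y. chr G y l j k) i x - pd (\<lambda>y. chr G y l i k) j x
     + (\<Sum>m\<in>UNIV. chr G x m j k * chr G x l i m - chr G x m i k * chr G x l j m)"

text \<open>R_{ijkl} = g(R(d_i,d_j)d_k, d_l).\<close>
definition curv :: "(real^'i \<Rightarrow> 'i \<Rightarrow> 'i \<Rightarrow> real) \<Rightarrow> real^'i \<Rightarrow> 'i \<Rightarrow> 'i \<Rightarrow> 'i \<Rightarrow> 'i \<Rightarrow> real" where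
  "curv G x i j k l = (\<Sum>p\<in>UNIV. curv_up G x p i j k * G x p l)"

definition curv_vec :: "(real^'i \<Rightarrow> 'i \<Rightarrow> 'i \<Rightarrow> real) \<Rightarrow> real^'i \<Rightarrow> real^'i \<Rightarrow> real^'i \<Rightarrow> real^'i \<Rightarrow> real^'i \<Rightarrow> real" where
  "curv_vec G x X Y Z W =
     (\<Sum>a\<in>UNIV. \<Sum>b\<in>UNIV. \<Sum>c\<in>UNIV. \<Sum>d\<in>UNIV. X$a * Y$b * Z$c * W$d * curv G x a b c d)"

text \<open>phi x j i = phi_j^i, i.e. phi d_j = sum_i phi_j^i d_i; xi x i = xi^i;
  eta_i = g_{ij} xi^j.\<close>
definition eta_of :: "(real^'i \<Rightarrow> 'i \<Rightarrow> 'i \<Rightarrow> real) \<Rightarrow> (real^'i \<Rightarrow> 'i \<Rightarrow> real) \<Rightarrow> real^'i \<Rightarrow> 'i \<Rightarrow> real" where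
  "eta_of G xi x i = (\<Sum>j\<in>UNIV. G x i j * xi x j)"

definition almost_contact_metric ::
  "(real^'i) set \<Rightarrow> (real^'i \<Rightarrow> 'i \<Rightarrow> 'i \<Rightarrow> real) \<Rightarrow> (real^'i \<Rightarrow> 'i \<Rightarrow> 'i \<Rightarrow> real)
   \<Rightarrow> (real^'i \<Rightarrow> 'i \<Rightarrow> real) \<Rightarrow> bool" where
  "almost_contact_metric U G phi xi \<longleftrightarrow>
     riemannian_metric U G \<and>
     (\<forall>a b. smooth_on U (\<lambda>x. phi x a b)) \<and> (\<forall>a. smooth_on U (\<lambda>x. xi x a)) \<and>
     (\<forall>x\<in>U.
        (\<forall>j k. (\<Sum>i\<in>UNIV. phi x j i * phi x i k) = - (if j = k then 1 else 0) + eta_of G xi x j * xi x k) \<and>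
        (\<forall>i. (\<Sum>j\<in>UNIV. xi x j * phi x j i) = 0) \<and>
        (\<forall>j. (\<Sum>i\<in>UNIV. phi x j i * eta_of G xi x i) = 0) \<and>
        (\<Sum>i\<in>UNIV. eta_of G xi x i * xi x i) = 1 \<and>
        (\<forall>i j. (\<Sum>a\<in>UNIV. \<Sum>b\<in>UNIV. phi x i a * phi x j b * G x a b)
                 = G x i j - eta_of G xi x i * eta_of G xi x j))"

text \<open>Coordinates on M x R: index Some i for the coordinates of M, None for t.\<close>
definition base :: "real^('i::finite option) \<Rightarrow> real^'i" where
  "base y = (\<chi> i. y $ Some i)"

definition tcoord :: "real^('i::finite option) \<Rightarrow> real" where
  "tcoord y = y $ None"

definition Mbar :: "(real^'i) set \<Rightarrow> (real^('i::finite option)) set" where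
  "Mbar U = {y. base y \<in> U}"

definition gbar :: "(real^'i \<Rightarrow> 'i \<Rightarrow> 'i \<Rightarrow> real) \<Rightarrow> real^('i::finite option) \<Rightarrow> ('i::finite) option \<Rightarrow> ('i::finite) option \<Rightarrow> real" where
  "gbar G y a b = exp (-2 * tcoord y) *
     (case (a, b) of (Some i, Some j) \<Rightarrow> G (base y) i j | (None, None) \<Rightarrow> 1 | _ \<Rightarrow> 0)"

text \<open>Jbar y b a = component along d_a of Jbar d_b.
  Jbar d_j = phi d_j - eta_j d_t, Jbar d_t = xi.\<close>
definition Jbar :: "(real^'i \<Rightarrow> 'i \<Rightarrow> 'i \<Rightarrow> real) \<Rightarrow> (real^'i \<Rightarrow> 'i \<Rightarrow> 'i \<Rightarrow> real) \<Rightarrow> (real^'i \<Rightarrow> 'i \<Rightarrow> real)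
     \<Rightarrow> real^('i::finite option) \<Rightarrow> ('i::finite) option \<Rightarrow> ('i::finite) option \<Rightarrow> real" where
  "Jbar G phi xi y b a =
     (case (b, a) of
        (Some j, Some i) \<Rightarrow> phi (base y) j i
      | (Some j, None) \<Rightarrow> - eta_of G xi (base y) j
      | (None, Some i) \<Rightarrow> xi (base y) i
      | (None, None) \<Rightarrow> 0)"

definition Jvec :: "(real^'i \<Rightarrow> 'i \<Rightarrow> 'i \<Rightarrow> real) \<Rightarrow> (real^'i \<Rightarrow> 'i \<Rightarrow> 'i \<Rightarrow> real) \<Rightarrow> (real^'i \<Rightarrow> 'i \<Rightarrow> real)
     \<Rightarrow> real^('i::finite option) \<Rightarrow> real^('i::finite option) \<Rightarrow> real^('i::finite option)" where
  "Jvec G phi xi y X = (\<chi> a. \<Sum>b\<in>UNIV. X $ b * Jbar G phi xi y b a)"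

end

theory Submission
  imports Defs
begin

lemma pd_cong:
  fixes f g :: "real^'i \<Rightarrow> real"
  assumes "open U" "x \<in> U" "\<And>z. z \<in> U \<Longrightarrow> f z = g z"
  shows "pd f i x = pd g i x"
proof -
  let ?S = "{s::real. x + s *\<^sub>R axis i 1 \<in> U}"
  have oS: "open ?S"
    proof -
    have "open ((\<lambda>s::real. x + s *\<^sub>R axis i 1) -` U)"
      by (rule continuous_open_vimage[OF assms(1)]) (intro continuous_intros)
    then show ?thesis by (simp add: vimage_def)
  qed
  have 0: "0 \<in> ?S" using assms by simp
  have "\<And>D. ((\<lambda>s. f (x + s *\<^sub>R axis i 1)) has_vector_derivative D) (at 0)
     \<longleftrightarrow> ((\<lambda>s. g (x + s *\<^sub>R axis i 1)) has_vector_derivative D) (at 0)"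
    using has_vector_derivative_transform_within_open[OF _ oS 0] assms(3) by (metis (no_types, lifting) mem_Collect_eq)
  then show ?thesis unfolding pd_def vector_derivative_def by simp
qed

lemma base_add_Some: "base (y + s *\<^sub>R axis (Some m) 1) = base y + s *\<^sub>R axis m 1"
  by (simp add: base_def vec_eq_iff axis_def)
lemma tcoord_add_Some: "tcoord (y + s *\<^sub>R axis (Some m) 1) = tcoord y"
  by (simp add: tcoord_def axis_def)
lemma base_add_None: "base (y + s *\<^sub>R axis None 1) = base y"
  by (simp add: base_def vec_eq_iff axis_def)
lemma tcoord_add_None: "tcoord (y + s *\<^sub>R axis None 1) = tcoord y + s"
  by (simp add: tcoord_def axis_def)

lemma pd_base_Some:
  fixes F :: "real^('i::finite option) \<Rightarrow> real"
  assumes "open U" "base y \<in> U" "\<And>z. base z \<in> U \<Longrightarrow> F z = c (base z)"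
  shows "pd F (Some m) y = pd c m (base y)"
proof -
  have "pd F (Some m) y = pd (\<lambda>z. c (base z)) (Some m) y"
  proof -
    let ?S = "{s::real. base y + s *\<^sub>R axis m 1 \<in> U}"
    have oS: "open ?S"
      proof -
    have "open ((\<lambda>s::real. base y + s *\<^sub>R axis m 1) -` U)"
      by (rule continuous_open_vimage[OF assms(1)]) (intro continuous_intros)
    then show ?thesis by (simp add: vimage_def)
  qed
    have 0: "0 \<in> ?S" using assms by simp
    have "\<And>D. ((\<lambda>s. F (y + s *\<^sub>R axis (Some m) 1)) has_vector_derivative D) (at 0)
       \<longleftrightarrow> ((\<lambda>s. c (base (y + s *\<^sub>R axis (Some m) 1))) has_vector_derivative D) (at 0)"
      using has_vector_derivative_transform_within_open[OF _ oS 0] assms(3)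
      by (smt (verit, best) base_add_Some mem_Collect_eq)
    then show ?thesis unfolding pd_def vector_derivative_def by simp
  qed
  also have "\<dots> = pd c m (base y)" unfolding pd_def base_add_Some ..
  finally show ?thesis .
qed

lemma pd_base_None:
  fixes F :: "real^('i::finite option) \<Rightarrow> real"
  assumes "base y \<in> U" "\<And>z. base z \<in> U \<Longrightarrow> F z = c (base z)"
  shows "pd F None y = 0"
proof -
  have "(\<lambda>s. F (y + s *\<^sub>R axis None 1)) = (\<lambda>s. c (base y))"
    using assms by (auto simp: base_add_None)
  then show ?thesis unfolding pd_def by simp
qed


lemma sum_option: "(\<Sum>a\<in>(UNIV::'a::finite option set). f a) = f None + (\<Sum>a\<in>UNIV. f (Some a))"
proof -
  have "(UNIV::'a option set) = insert None (range Some)" by (rule UNIV_option_conv)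
  moreover have "sum f (insert None (range Some)) = f None + sum f (range Some)"
    by (rule sum.insert) auto
  ultimately have "(\<Sum>a\<in>(UNIV::'a option set). f a) = f None + sum f (range Some)"
    by simp
  also have "sum f (range Some) = (\<Sum>a\<in>UNIV. f (Some a))"
    by (simp add: sum.reindex)
  finally show ?thesis .
qed

lemma smooth_diff:
  assumes "smooth_on U f" "x \<in> U"
  shows "(\<lambda>s. f (x + s *\<^sub>R axis i 1)) differentiable (at 0)"
  using assms unfolding smooth_on_def by (metis Ck.simps(2))

lemma pd_exp_Some:
  fixes h :: "real^'i \<Rightarrow> real"
  assumes "(\<lambda>s. h (base y + s *\<^sub>R axis m 1)) differentiable (at 0)"
  shows "pd (\<lambda>z::real^('i::finite option). exp (-2 * tcoord z) * h (base z)) (Some m) y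
         = exp (-2 * tcoord y) * pd h m (base y)"
proof -
  have "(\<lambda>s. exp (-2 * tcoord (y + s *\<^sub>R axis (Some m) 1)) * h (base (y + s *\<^sub>R axis (Some m) 1)))
      = (\<lambda>s. exp (-2 * tcoord y) * h (base y + s *\<^sub>R axis m 1))"
    by (simp add: base_add_Some tcoord_add_Some)
  moreover have "((\<lambda>s. h (base y + s *\<^sub>R axis m 1)) has_vector_derivative pd h m (base y)) (at 0)"
    using assms unfolding pd_def by (simp add: vector_derivative_works[symmetric])
  then have "((\<lambda>s. exp (-2 * tcoord y) * h (base y + s *\<^sub>R axis m 1)) has_vector_derivative
      exp (-2 * tcoord y) * pd h m (base y)) (at 0)"
    by (rule has_vector_derivative_mult_right)
  ultimately show ?thesis unfolding pd_def
    using vector_derivative_at by fastforce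
qed

lemma pd_exp_None:
  fixes h :: "real^'i \<Rightarrow> real"
  shows "pd (\<lambda>z::real^('i::finite option). exp (-2 * tcoord z) * h (base z)) None y
         = -2 * exp (-2 * tcoord y) * h (base y)"
proof -
  have "(\<lambda>s. exp (-2 * tcoord (y + s *\<^sub>R axis None 1)) * h (base (y + s *\<^sub>R axis None 1)))
      = (\<lambda>s. exp (-2 * (tcoord y + s)) * h (base y))"
    by (simp add: base_add_None tcoord_add_None)
  moreover have "((\<lambda>s. exp (-2 * (tcoord y + s)) * h (base y)) has_real_derivative
      -2 * exp (-2 * tcoord y) * h (base y)) (at 0)"
    by (auto intro!: derivative_eq_intros)
  ultimately show ?thesis unfolding pd_def
    by (simp add: has_real_derivative_iff_has_vector_derivative vector_derivative_at)
qed


definition gc :: "(real^'i \<Rightarrow> 'i \<Rightarrow> 'i \<Rightarrow> real) \<Rightarrow> 'i option \<Rightarrow> 'i option \<Rightarrow> real^'i \<Rightarrow> real" where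
  "gc G P Q x = (case (P,Q) of (Some i, Some j) \<Rightarrow> G x i j | (None, None) \<Rightarrow> 1 | _ \<Rightarrow> 0)"

lemma gc_fun: "gc G P Q = (\<lambda>x. case (P,Q) of (Some i, Some j) \<Rightarrow> G x i j | (None, None) \<Rightarrow> 1 | _ \<Rightarrow> 0)"
  by (rule ext) (simp add: gc_def)

lemma gbar_gc: "gbar G z P Q = exp (-2 * tcoord z) * gc G P Q (base z)"
  by (simp add: gbar_def gc_def)

lemma pd_const: "pd (\<lambda>x. c) m x = 0"
  by (simp add: pd_def)

lemma dgbar:
  assumes "riemannian_metric U G" "base y \<in> U"
  shows "pd (\<lambda>z. gbar G z P Q) M y =
    (case M of None \<Rightarrow> -2 * exp (-2 * tcoord y) * gc G P Q (base y)
     | Some m \<Rightarrow> exp (-2 * tcoord y) * (case (P,Q) of (Some i, Some j) \<Rightarrow> pd (\<lambda>x. G x i j) m (base y) | _ \<Rightarrow> 0))"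
proof (cases M)
  case None
  then show ?thesis unfolding gbar_gc using pd_exp_None[of "gc G P Q" y] by simp
next
  case (Some m)
  have d: "(\<lambda>s. gc G P Q (base y + s *\<^sub>R axis m 1)) differentiable (at 0)"
  proof (cases P; cases Q)
    fix i j assume "P = Some i" "Q = Some j"
    then show ?thesis using assms smooth_diff[of U "\<lambda>x. G x i j" "base y" m]
      unfolding riemannian_metric_def gc_def by simp
  qed (simp_all add: gc_def)
  have "pd (\<lambda>z. gbar G z P Q) M y = exp (-2 * tcoord y) * pd (gc G P Q) m (base y)"
    unfolding gbar_gc Some by (rule pd_exp_Some[OF d])
  moreover have "pd (gc G P Q) m (base y) = (case (P,Q) of (Some i, Some j) \<Rightarrow> pd (\<lambda>x. G x i j) m (base y) | _ \<Rightarrow> 0)"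
    by (cases P; cases Q) (simp_all add: gc_fun pd_const)
  ultimately show ?thesis using Some by simp
qed

definition c1tab :: "(real^'i \<Rightarrow> 'i \<Rightarrow> 'i \<Rightarrow> real) \<Rightarrow> real^'i \<Rightarrow> 'i option \<Rightarrow> 'i option \<Rightarrow> 'i option \<Rightarrow> real" where
  "c1tab G x P Q R = (case (P,Q,R) of
     (Some i, Some j, Some k) \<Rightarrow> chr1 G x i j k
   | (Some i, Some j, None) \<Rightarrow> G x i j
   | (Some i, None, Some k) \<Rightarrow> - G x i k
   | (None, Some j, Some k) \<Rightarrow> - G x j k
   | (None, None, None) \<Rightarrow> -1
   | _ \<Rightarrow> 0)"

lemma chr1_gbar:
  assumes "riemannian_metric U G" "base y \<in> U"
  shows "chr1 (gbar G) y P Q R = exp (-2 * tcoord y) * c1tab G (base y) P Q R"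
  unfolding chr1_def dgbar[OF assms]
  by (cases P; cases Q; cases R) (simp_all add: c1tab_def gc_def chr1_def algebra_simps)


lemma matrix_inv_eq:
  fixes A B :: "real^'n^'n"
  assumes "A ** B = mat 1" "B ** A = mat 1"
  shows "matrix_inv A = B"
proof -
  have "\<exists>A'. A ** A' = mat 1 \<and> A' ** A = mat 1" using assms by blast
  then have C: "A ** matrix_inv A = mat 1 \<and> matrix_inv A ** A = mat 1"
    unfolding matrix_inv_def by (rule someI_ex)
  have "matrix_inv A = matrix_inv A ** (A ** B)" using assms by (simp add: matrix_mul_rid)
  also have "\<dots> = (matrix_inv A ** A) ** B" by (simp add: matrix_mul_assoc)
  also have "\<dots> = B" using C by (simp add: matrix_mul_lid)
  finally show ?thesis .
qed

lemma ginv_G: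
  assumes "riemannian_metric U G" "x \<in> U"
  shows "(\<Sum>k\<in>UNIV. G x a k * ginv G x k b) = (if a = b then 1 else 0)"
    and "(\<Sum>k\<in>UNIV. ginv G x a k * G x k b) = (if a = b then 1 else 0)"
proof -
  define A where "A = (\<chi> p q. G x p q)"
  have ker: "\<forall>v. A *v v = 0 \<longrightarrow> v = 0"
  proof (intro allI impI)
    fix v assume Av: "A *v v = 0"
    show "v = 0"
    proof (rule ccontr)
      assume "v \<noteq> 0"
      then have pos: "(\<Sum>a\<in>UNIV. \<Sum>b\<in>UNIV. v$a * v$b * G x a b) > 0"
        using assms unfolding riemannian_metric_def by blast
      have "\<And>a. (\<Sum>b\<in>UNIV. G x a b * v$b) = 0"
        using Av by (simp add: A_def matrix_vector_mult_def vec_eq_iff)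
      then have "\<And>a. (\<Sum>b\<in>UNIV. v$b * G x a b) = 0" by (simp add: mult.commute)
      then have "(\<Sum>a\<in>UNIV. \<Sum>b\<in>UNIV. v$a * v$b * G x a b) = 0"
        by (simp add: sum_distrib_left[symmetric] mult.assoc)
      with pos show False by simp
    qed
  qed
  then have "\<exists>B. B ** A = mat 1" using matrix_left_invertible_ker by blast
  then have "invertible A" using invertible_left_inverse by blast
  then have "\<exists>A'. A ** A' = mat 1 \<and> A' ** A = mat 1" unfolding invertible_def by blast
  then have C: "A ** matrix_inv A = mat 1 \<and> matrix_inv A ** A = mat 1"
    unfolding matrix_inv_def by (rule someI_ex)
  have gi: "ginv G x = (\<lambda>a b. matrix_inv A $ a $ b)" by (intro ext) (simp add: ginv_def A_def)
  show "(\<Sum>k\<in>UNIV. G x a k * ginv G x k b) = (if a = b then 1 else 0)"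
    using C unfolding gi by (auto simp: vec_eq_iff matrix_matrix_mult_def mat_def A_def)
  show "(\<Sum>k\<in>UNIV. ginv G x a k * G x k b) = (if a = b then 1 else 0)"
    using C unfolding gi by (auto simp: vec_eq_iff matrix_matrix_mult_def mat_def A_def)
qed

definition gci :: "(real^'i \<Rightarrow> 'i \<Rightarrow> 'i \<Rightarrow> real) \<Rightarrow> real^'i \<Rightarrow> 'i option \<Rightarrow> 'i option \<Rightarrow> real" where
  "gci G x P Q = (case (P,Q) of (Some i, Some j) \<Rightarrow> ginv G x i j | (None, None) \<Rightarrow> 1 | _ \<Rightarrow> 0)"

lemma ginv_gbar:
  assumes "riemannian_metric U G" "base y \<in> U"
  shows "ginv (gbar G) y P Q = exp (2 * tcoord y) * gci G (base y) P Q"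
proof -
  define B where "B = (\<chi> p q. gbar G y p q)"
  define C where "C = (\<chi> p q. exp (2 * tcoord y) * gci G (base y) p q)"
  have e: "exp (- (2 * tcoord y)) * exp (2 * tcoord y) = 1"
    by (simp add: exp_minus field_simps)
  have 1: "B ** C = mat 1"
  proof -
    have "(\<Sum>R\<in>UNIV. gbar G y P R * (exp (2 * tcoord y) * gci G (base y) R Q)) = (if P = Q then 1 else 0)" for P Q
    proof -
      have "(\<Sum>R\<in>UNIV. gbar G y P R * (exp (2 * tcoord y) * gci G (base y) R Q))
          = (\<Sum>R\<in>UNIV. gc G P R (base y) * gci G (base y) R Q)"
        unfolding gbar_gc using e by (simp add: algebra_simps)
      also have "\<dots> = (if P = Q then 1 else 0)"
        by (cases P; cases Q) (simp_all add: sum_option gc_def gci_def ginv_G[OF assms])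
      finally show ?thesis .
    qed
    then show ?thesis by (simp add: vec_eq_iff matrix_matrix_mult_def mat_def B_def C_def)
  qed
  have 2: "C ** B = mat 1"
  proof -
    have "(\<Sum>R\<in>UNIV. exp (2 * tcoord y) * gci G (base y) P R * gbar G y R Q) = (if P = Q then 1 else 0)" for P Q
    proof -
      have "(\<Sum>R\<in>UNIV. exp (2 * tcoord y) * gci G (base y) P R * gbar G y R Q)
          = (\<Sum>R\<in>UNIV. gci G (base y) P R * gc G R Q (base y))"
        unfolding gbar_gc using e by (simp add: algebra_simps)
      also have "\<dots> = (if P = Q then 1 else 0)"
        by (cases P; cases Q) (simp_all add: sum_option gc_def gci_def ginv_G[OF assms])
      finally show ?thesis .
    qed
    then show ?thesis by (simp add: vec_eq_iff matrix_matrix_mult_def mat_def B_def C_def)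
  qed
  have "matrix_inv B = C" by (rule matrix_inv_eq[OF 1 2])
  then show ?thesis by (simp add: ginv_def B_def C_def)
qed


definition ctab :: "(real^'i \<Rightarrow> 'i \<Rightarrow> 'i \<Rightarrow> real) \<Rightarrow> real^'i \<Rightarrow> 'i option \<Rightarrow> 'i option \<Rightarrow> 'i option \<Rightarrow> real" where
  "ctab G x L P Q = (case (L,P,Q) of
     (Some l, Some i, Some j) \<Rightarrow> chr G x l i j
   | (None, Some i, Some j) \<Rightarrow> G x i j
   | (Some l, Some i, None) \<Rightarrow> - (if l = i then 1 else 0)
   | (Some l, None, Some j) \<Rightarrow> - (if l = j then 1 else 0)
   | (None, None, None) \<Rightarrow> -1
   | _ \<Rightarrow> 0)"

lemma G_sym: "riemannian_metric U G \<Longrightarrow> x \<in> U \<Longrightarrow> G x a b = G x b a"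
  unfolding riemannian_metric_def by blast

lemma chr_gbar:
  assumes "riemannian_metric U G" "base y \<in> U"
  shows "chr (gbar G) y L P Q = ctab G (base y) L P Q"
proof -
  have e: "exp (2 * tcoord y) * exp (- (2 * tcoord y)) = 1"
    by (simp add: exp_minus field_simps)
  have "chr (gbar G) y L P Q = (\<Sum>K\<in>UNIV. gci G (base y) L K * c1tab G (base y) P Q K)"
    unfolding chr_def ginv_gbar[OF assms] chr1_gbar[OF assms]
    by (rule sum.cong) (use e in \<open>simp_all add: algebra_simps\<close>)
  also have "\<dots> = ctab G (base y) L P Q"
  proof (cases L; cases P; cases Q)
    fix l i j assume "L = Some l" "P = Some i" "Q = None"
    then show ?thesis
      using ginv_G(2)[OF assms, of l i] G_sym[OF assms(1,2)]
      by (simp add: sum_option gci_def c1tab_def ctab_def sum_negf)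
  next
    fix l i j assume "L = Some l" "P = None" "Q = Some j"
    then show ?thesis
      using ginv_G(2)[OF assms, of l j] G_sym[OF assms(1,2)]
      by (simp add: sum_option gci_def c1tab_def ctab_def sum_negf)
  qed (simp_all add: sum_option gci_def c1tab_def ctab_def chr_def)
  finally show ?thesis .
qed


lemma pd_G_sym:
  assumes "riemannian_metric U G" "x \<in> U"
  shows "pd (\<lambda>x. G x a b) m x = pd (\<lambda>x. G x b a) m x"
  using assms by (intro pd_cong[of U]) (auto simp: riemannian_metric_def)

lemma chr1_sym:
  assumes "riemannian_metric U G" "x \<in> U"
  shows "chr1 G x i j k = chr1 G x j i k"
  unfolding chr1_def using pd_G_sym[OF assms, of i j k] by simp

lemma chr_sym:
  assumes "riemannian_metric U G" "x \<in> U"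
  shows "chr G x l i j = chr G x l j i"
  unfolding chr_def using chr1_sym[OF assms] by simp

lemma ifmult1: "(if P then 1 else 0) * (c::real) = (if P then c else 0)" by simp
lemma ifmult2: "(c::real) * (if P then 1 else 0) = (if P then c else 0)" by simp

lemma chr_low:
  assumes "riemannian_metric U G" "x \<in> U"
  shows "(\<Sum>m\<in>UNIV. chr G x m j k * G x i m) = chr1 G x j k i"
proof -
  have "(\<Sum>m\<in>UNIV. chr G x m j k * G x i m) = (\<Sum>m\<in>UNIV. \<Sum>q\<in>UNIV. G x i m * ginv G x m q * chr1 G x j k q)"
    unfolding chr_def by (simp add: sum_distrib_left sum_distrib_right mult_ac)
  also have "\<dots> = (\<Sum>q\<in>UNIV. (\<Sum>m\<in>UNIV. G x i m * ginv G x m q) * chr1 G x j k q)"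
    by (subst sum.swap) (simp add: sum_distrib_right)
  also have "\<dots> = chr1 G x j k i"
    by (simp add: ginv_G(1)[OF assms] ifmult1 sum.delta)
  finally show ?thesis .
qed

lemma pd_chr_gbar:
  assumes "riemannian_metric U G" "base y \<in> U"
  shows "pd (\<lambda>z. chr (gbar G) z L P Q) M y =
     (case M of Some m \<Rightarrow> pd (\<lambda>x. ctab G x L P Q) m (base y) | None \<Rightarrow> 0)"
proof (cases M)
  case None
  then show ?thesis using pd_base_None[of y U "\<lambda>z. chr (gbar G) z L P Q" "\<lambda>x. ctab G x L P Q"]
    chr_gbar[OF assms(1)] assms by simp
next
  case (Some m)
  have "open U" using assms(1) by (simp add: riemannian_metric_def)
  then show ?thesis using pd_base_Some[of U y "\<lambda>z. chr (gbar G) z L P Q" "\<lambda>x. ctab G x L P Q"]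
    chr_gbar[OF assms(1)] assms Some by simp
qed

definition Rup :: "(real^'i \<Rightarrow> 'i \<Rightarrow> 'i \<Rightarrow> real) \<Rightarrow> real^'i \<Rightarrow> 'i option \<Rightarrow> 'i option \<Rightarrow> 'i option \<Rightarrow> 'i option \<Rightarrow> real" where
  "Rup G x L I J K = (case (L,I,J,K) of
     (Some l, Some i, Some j, Some k) \<Rightarrow> curv_up G x l i j k - G x j k * (if l = i then 1 else 0) + G x i k * (if l = j then 1 else 0)
   | _ \<Rightarrow> 0)"

lemma curv_up_gbar:
  assumes "riemannian_metric U G" "base y \<in> U"
  shows "curv_up (gbar G) y L I J K = Rup G (base y) L I J K"
proof -
  note sy = G_sym[OF assms] chr_sym[OF assms] pd_G_sym[OF assms]
  have "curv_up (gbar G) y L I J K =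
     (case I of Some i \<Rightarrow> pd (\<lambda>x. ctab G x L J K) i (base y) | None \<Rightarrow> 0)
   - (case J of Some j \<Rightarrow> pd (\<lambda>x. ctab G x L I K) j (base y) | None \<Rightarrow> 0)
   + (\<Sum>M\<in>UNIV. ctab G (base y) M J K * ctab G (base y) L I M - ctab G (base y) M I K * ctab G (base y) L J M)"
    unfolding curv_up_def pd_chr_gbar[OF assms] chr_gbar[OF assms] ..
  also have "\<dots> = Rup G (base y) L I J K"
    apply (cases L; cases I; cases J; cases K)
    apply (simp_all add: sum_option ctab_def Rup_def pd_const curv_up_def ifmult1 ifmult2 sum.delta sum.delta' sum_subtractf sum_negf sy)
    apply (simp add: chr_low[OF assms] chr1_def pd_G_sym[OF assms])
    apply (simp add: field_simps)
    done
  finally show ?thesis .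
qed


definition S0 :: "(real^'i \<Rightarrow> 'i \<Rightarrow> 'i \<Rightarrow> real) \<Rightarrow> real^'i \<Rightarrow> 'i option \<Rightarrow> 'i option \<Rightarrow> 'i option \<Rightarrow> 'i option \<Rightarrow> real" where
  "S0 G x A B C D = (case (A,B,C,D) of
     (Some a, Some b, Some c, Some d) \<Rightarrow> curv G x a b c d - G x a d * G x b c + G x a c * G x b d
   | _ \<Rightarrow> 0)"

lemma curv_gbar:
  assumes "riemannian_metric U G" "base y \<in> U"
  shows "curv (gbar G) y A B C D = exp (-2 * tcoord y) * S0 G (base y) A B C D"
proof -
  have "curv (gbar G) y A B C D = exp (-2 * tcoord y) * (\<Sum>P\<in>UNIV. Rup G (base y) P A B C * gc G P D (base y))"
    unfolding curv_def curv_up_gbar[OF assms] gbar_gc by (simp add: sum_distrib_left mult_ac)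
  also have "(\<Sum>P\<in>UNIV. Rup G (base y) P A B C * gc G P D (base y)) = S0 G (base y) A B C D"
  proof (cases A; cases B; cases C; cases D)
    fix a b c d assume *: "A = Some a" "B = Some b" "C = Some c" "D = Some d"
    have "(\<Sum>P\<in>UNIV. Rup G (base y) P A B C * gc G P D (base y))
       = (\<Sum>p\<in>UNIV. curv_up G (base y) p a b c * G (base y) p d)
         - (\<Sum>p\<in>UNIV. G (base y) b c * (if p = a then G (base y) p d else 0))
         + (\<Sum>p\<in>UNIV. G (base y) a c * (if p = b then G (base y) p d else 0))"
    proof -
      have t: "Rup G (base y) (Some p) A B C * gc G (Some p) D (base y) =
         curv_up G (base y) p a b c * G (base y) p d
         - G (base y) b c * (if p = a then G (base y) p d else 0)
         + G (base y) a c * (if p = b then G (base y) p d else 0)" for p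
        using * by (auto simp: Rup_def gc_def algebra_simps)
      have n: "Rup G (base y) None A B C = 0" by (simp add: Rup_def)
      show ?thesis unfolding sum_option n t by (simp add: sum.distrib sum_subtractf)
    qed
    also have "\<dots> = S0 G (base y) A B C D"
      using * by (simp add: S0_def curv_def sum_distrib_left[symmetric] sum.delta' sum.delta)
    finally show ?thesis .
  qed (simp_all add: sum_option Rup_def gc_def S0_def)
  finally show ?thesis .
qed


definition N4 :: "('a::finite \<Rightarrow> real) \<Rightarrow> ('a \<Rightarrow> real) \<Rightarrow> ('a \<Rightarrow> real) \<Rightarrow> ('a \<Rightarrow> real) \<Rightarrow> ('a \<Rightarrow> 'a \<Rightarrow> 'a \<Rightarrow> 'a \<Rightarrow> real) \<Rightarrow> real" where
  "N4 X Y Z W S = (\<Sum>a\<in>UNIV. X a * (\<Sum>b\<in>UNIV. Y b * (\<Sum>c\<in>UNIV. Z c * (\<Sum>d\<in>UNIV. W d * S a b c d))))"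

definition SJ :: "('a::finite \<Rightarrow> 'a \<Rightarrow> real) \<Rightarrow> ('a \<Rightarrow> 'a \<Rightarrow> 'a \<Rightarrow> 'a \<Rightarrow> real) \<Rightarrow> 'a \<Rightarrow> 'a \<Rightarrow> 'a \<Rightarrow> 'a \<Rightarrow> real" where
  "SJ M S p q r s = (\<Sum>a\<in>UNIV. M p a * (\<Sum>b\<in>UNIV. M q b * (\<Sum>c\<in>UNIV. M r c * (\<Sum>d\<in>UNIV. M s d * S a b c d))))"

lemma lin1: "(\<Sum>a\<in>UNIV. (\<Sum>p\<in>UNIV. X p * M p a) * F a) = (\<Sum>p\<in>UNIV. X p * (\<Sum>a\<in>UNIV. M p a * F a))"
  for X F :: "'a::finite \<Rightarrow> real"
  by (simp add: sum_distrib_left sum_distrib_right mult_ac) (rule sum.swap)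

lemma comm1: "(\<Sum>a\<in>UNIV. f a * (\<Sum>b\<in>UNIV. g b * H a b)) = (\<Sum>b\<in>UNIV. g b * (\<Sum>a\<in>UNIV. f a * H a b))"
  for f g :: "'a::finite \<Rightarrow> real"
  by (simp add: sum_distrib_left sum_distrib_right mult_ac) (rule sum.swap)

lemma contrJ:
  fixes X Y Z W :: "'a::finite \<Rightarrow> real"
  shows "N4 (\<lambda>a. \<Sum>p\<in>UNIV. X p * M p a) (\<lambda>b. \<Sum>q\<in>UNIV. Y q * M q b)
            (\<lambda>c. \<Sum>r\<in>UNIV. Z r * M r c) (\<lambda>d. \<Sum>s\<in>UNIV. W s * M s d) S
       = N4 X Y Z W (SJ M S)"
proof -
  have cY: "\<And>p H. (\<Sum>a\<in>UNIV. M p a * (\<Sum>q\<in>UNIV. Y q * H a q)) = (\<Sum>q\<in>UNIV. Y q * (\<Sum>a\<in>UNIV. M p a * H a q))"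
    by (rule comm1)
  have cZ: "\<And>p H. (\<Sum>a\<in>UNIV. M p a * (\<Sum>q\<in>UNIV. Z q * H a q)) = (\<Sum>q\<in>UNIV. Z q * (\<Sum>a\<in>UNIV. M p a * H a q))"
    by (rule comm1)
  have cW: "\<And>p H. (\<Sum>a\<in>UNIV. M p a * (\<Sum>q\<in>UNIV. W q * H a q)) = (\<Sum>q\<in>UNIV. W q * (\<Sum>a\<in>UNIV. M p a * H a q))"
    by (rule comm1)
  show ?thesis
    unfolding N4_def SJ_def
    by (simp only: lin1 cY cZ cW)
qed


definition B2 :: "('a::finite \<Rightarrow> real) \<Rightarrow> ('a \<Rightarrow> real) \<Rightarrow> ('a \<Rightarrow> 'a \<Rightarrow> real) \<Rightarrow> real" where
  "B2 u z P = (\<Sum>a\<in>UNIV. u a * (\<Sum>d\<in>UNIV. z d * P a d))"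

lemma sepsum: "(\<Sum>a\<in>UNIV. u a * (\<Sum>b\<in>UNIV. v b * (F a * H b))) = (\<Sum>a\<in>UNIV. u a * F a) * (\<Sum>b\<in>UNIV. v b * (H b::real))"
  by (simp add: sum_product sum_distrib_left mult_ac) (rule sum.swap)

lemma N4_fact1: "N4 u v w z (\<lambda>a b c d. P a d * Q b c) = B2 u z P * B2 v w Q"
proof -
  have i: "\<And>a b. (\<Sum>c\<in>UNIV. w c * (\<Sum>d\<in>UNIV. z d * (P a d * Q b c)))
      = (\<Sum>d\<in>UNIV. z d * P a d) * (\<Sum>c\<in>UNIV. w c * Q b c)"
    by (simp add: sum_product sum_distrib_left mult_ac) (rule sum.swap)
  show ?thesis unfolding N4_def B2_def i sepsum ..
qed

lemma N4_fact2: "N4 u v w z (\<lambda>a b c d. P a c * Q b d) = B2 u w P * B2 v z Q"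
proof -
  have i: "\<And>a b. (\<Sum>c\<in>UNIV. w c * (\<Sum>d\<in>UNIV. z d * (P a c * Q b d)))
      = (\<Sum>c\<in>UNIV. w c * P a c) * (\<Sum>d\<in>UNIV. z d * Q b d)"
    by (simp add: sum_product sum_distrib_left mult_ac) (rule sum.swap)
  show ?thesis unfolding N4_def B2_def i sepsum ..
qed


lemma N4_flat: "N4 u v w z S = (\<Sum>a\<in>UNIV. \<Sum>b\<in>UNIV. \<Sum>c\<in>UNIV. \<Sum>d\<in>UNIV. u a * v b * w c * z d * S a b c d)"
  unfolding N4_def by (simp add: sum_distrib_left mult_ac)

lemma N4_lin: "N4 u v w z (\<lambda>a b c d. F a b c d - P a b c d + Q a b c d) = N4 u v w z F - N4 u v w z P + N4 u v w z Q"
  unfolding N4_def by (simp add: sum.distrib sum_subtractf algebra_simps)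

lemma SJ_N4: "SJ M S p q r s = N4 (M p) (M q) (M r) (M s) S"
  unfolding SJ_def N4_def ..

lemma alg:
  fixes g R :: "'n::finite \<Rightarrow> 'n \<Rightarrow> real" and phi :: "'n \<Rightarrow> 'n \<Rightarrow> real" and xi eta :: "'n \<Rightarrow> real"
    and RR :: "'n \<Rightarrow> 'n \<Rightarrow> 'n \<Rightarrow> 'n \<Rightarrow> real"
  assumes symg: "\<And>a b. g a b = g b a"
    and eta: "\<And>i. eta i = (\<Sum>j\<in>UNIV. g i j * xi j)"
    and ax2: "\<And>i. (\<Sum>j\<in>UNIV. xi j * phi j i) = 0"
    and ax3: "\<And>j. (\<Sum>i\<in>UNIV. phi j i * eta i) = 0"
    and ax4: "(\<Sum>i\<in>UNIV. eta i * xi i) = 1"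
    and ax5: "\<And>i j. (\<Sum>a\<in>UNIV. \<Sum>b\<in>UNIV. phi i a * phi j b * g a b) = g i j - eta i * eta j"
  defines "T \<equiv> (\<lambda>a b c d. RR a b c d - g a d * g b c + g a c * g b d)"
  defines "K \<equiv> (\<lambda>A. case A of Some j \<Rightarrow> phi j | None \<Rightarrow> xi)"
  defines "Sz \<equiv> (\<lambda>A B C D. case (A,B,C,D) of (Some a, Some b, Some c, Some d) \<Rightarrow> T a b c d | _ \<Rightarrow> 0)"
  shows "(\<forall>A B C D. Sz A B C D = N4 (K A) (K B) (K C) (K D) T) \<longleftrightarrow>
    (\<forall>i j k l. RR i j k l - N4 (phi i) (phi j) (phi k) (phi l) RR
          = g i l * eta j * eta k + g j k * eta i * eta l - g i k * eta j * eta l - g j l * eta i * eta k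
       \<and> N4 xi (phi j) (phi k) (phi l) RR = 0
       \<and> N4 xi (phi j) xi (phi l) RR = - g j l + eta j * eta l)"
proof -
  have b1: "B2 (phi i) (phi l) g = g i l - eta i * eta l" for i l
    using ax5[of i l] unfolding B2_def by (simp add: sum_distrib_left mult_ac)
  have b2: "B2 xi (phi l) g = 0" for l
  proof -
    have "B2 xi (phi l) g = (\<Sum>d\<in>UNIV. phi l d * (\<Sum>a\<in>UNIV. xi a * g a d))"
      unfolding B2_def by (simp add: sum_distrib_left mult_ac) (rule sum.swap)
    also have "\<dots> = (\<Sum>d\<in>UNIV. phi l d * eta d)"
      unfolding eta by (intro sum.cong refl) (simp add: symg mult.commute)
    also have "\<dots> = 0" using ax3[of l] by simp
    finally show ?thesis .
  qed
  have b3: "B2 (phi j) xi g = 0" for j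
    unfolding B2_def using ax3[of j] by (simp add: eta mult_ac)
  have b4: "B2 xi xi g = 1"
    unfolding B2_def using ax4 by (simp add: eta mult_ac)
  have NT: "N4 u v w z T = N4 u v w z RR - B2 u z g * B2 v w g + B2 u w g * B2 v z g" for u v w z
    unfolding T_def N4_lin N4_fact1 N4_fact2 ..
  show ?thesis
  proof
    assume H: "\<forall>A B C D. Sz A B C D = N4 (K A) (K B) (K C) (K D) T"
    show "\<forall>i j k l. RR i j k l - N4 (phi i) (phi j) (phi k) (phi l) RR
          = g i l * eta j * eta k + g j k * eta i * eta l - g i k * eta j * eta l - g j l * eta i * eta k
       \<and> N4 xi (phi j) (phi k) (phi l) RR = 0
       \<and> N4 xi (phi j) xi (phi l) RR = - g j l + eta j * eta l"
    proof (intro allI conjI)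
      fix i j k l
      have "T i j k l = N4 (phi i) (phi j) (phi k) (phi l) T"
        using H[rule_format, of "Some i" "Some j" "Some k" "Some l"] by (simp add: Sz_def K_def)
      then show "RR i j k l - N4 (phi i) (phi j) (phi k) (phi l) RR
          = g i l * eta j * eta k + g j k * eta i * eta l - g i k * eta j * eta l - g j l * eta i * eta k"
        unfolding NT b1 by (simp add: T_def algebra_simps)
      have "0 = N4 xi (phi j) (phi k) (phi l) T"
        using H[rule_format, of None "Some j" "Some k" "Some l"] by (simp add: Sz_def K_def)
      then show "N4 xi (phi j) (phi k) (phi l) RR = 0"
        unfolding NT b2 by simp
      have "0 = N4 xi (phi j) xi (phi l) T"
        using H[rule_format, of None "Some j" None "Some l"] by (simp add: Sz_def K_def)
      then show "N4 xi (phi j) xi (phi l) RR = - g j l + eta j * eta l"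
        unfolding NT b1 b2 b3 b4 by simp
    qed
  next
    assume H: "\<forall>i j k l. RR i j k l - N4 (phi i) (phi j) (phi k) (phi l) RR
          = g i l * eta j * eta k + g j k * eta i * eta l - g i k * eta j * eta l - g j l * eta i * eta k
       \<and> N4 xi (phi j) (phi k) (phi l) RR = 0
       \<and> N4 xi (phi j) xi (phi l) RR = - g j l + eta j * eta l"
    have Ta: "T i j k l = N4 (phi i) (phi j) (phi k) (phi l) T" for i j k l
      using H[rule_format, of i j k l] unfolding NT b1 by (simp add: T_def algebra_simps)
    then have TS: "T = SJ phi T" by (intro ext) (simp add: SJ_N4)
    have z: "(\<lambda>a. \<Sum>p\<in>UNIV. xi p * phi p a) = (\<lambda>a. 0)" using ax2 by simp
    show "\<forall>A B C D. Sz A B C D = N4 (K A) (K B) (K C) (K D) T"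
    proof (intro allI)
      fix A B C D
      have "N4 (K A) (K B) (K C) (K D) T = N4 (K A) (K B) (K C) (K D) (SJ phi T)"
        using TS by simp
      also have "\<dots> = N4 (\<lambda>a. \<Sum>p\<in>UNIV. K A p * phi p a) (\<lambda>b. \<Sum>q\<in>UNIV. K B q * phi q b)
            (\<lambda>c. \<Sum>r\<in>UNIV. K C r * phi r c) (\<lambda>d. \<Sum>s\<in>UNIV. K D s * phi s d) T"
        by (rule contrJ[symmetric])
      finally have e: "N4 (K A) (K B) (K C) (K D) T = \<dots>" .
      show "Sz A B C D = N4 (K A) (K B) (K C) (K D) T"
      proof (cases "A = None \<or> B = None \<or> C = None \<or> D = None")
        case True
        then have "Sz A B C D = 0" by (auto simp: Sz_def split: option.splits)
        moreover have "N4 (\<lambda>a. \<Sum>p\<in>UNIV. K A p * phi p a) (\<lambda>b. \<Sum>q\<in>UNIV. K B q * phi q b)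
            (\<lambda>c. \<Sum>r\<in>UNIV. K C r * phi r c) (\<lambda>d. \<Sum>s\<in>UNIV. K D s * phi s d) T = 0"
          using True ax2 by (auto simp: K_def N4_def)
        ultimately show ?thesis using e by simp
      next
        case False
        then obtain a b c d where "A = Some a" "B = Some b" "C = Some c" "D = Some d" by auto
        then show ?thesis using Ta by (simp add: Sz_def K_def)
      qed
    qed
  qed
qed


lemma curv_vec_N4: "curv_vec G' y X Y Z W = N4 (\<lambda>a. X$a) (\<lambda>b. Y$b) (\<lambda>c. Z$c) (\<lambda>d. W$d) (curv G' y)"
  unfolding curv_vec_def N4_flat ..

lemma N4_axis: "N4 (\<lambda>a. axis A 1 $ a) (\<lambda>b. axis B 1 $ b) (\<lambda>c. axis C 1 $ c) (\<lambda>d. axis D 1 $ d) S = S A B C D"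
  unfolding N4_def by (simp add: axis_def ifmult1 sum.delta' sum.delta)

lemma step1:
  fixes S :: "'a::finite \<Rightarrow> 'a \<Rightarrow> 'a \<Rightarrow> 'a \<Rightarrow> real"
  shows "(\<forall>X Y Z W :: real^'a. N4 (\<lambda>a. X$a) (\<lambda>b. Y$b) (\<lambda>c. Z$c) (\<lambda>d. W$d) S =
      N4 (\<lambda>a. \<Sum>p\<in>UNIV. X$p * M p a) (\<lambda>b. \<Sum>q\<in>UNIV. Y$q * M q b) (\<lambda>c. \<Sum>r\<in>UNIV. Z$r * M r c) (\<lambda>d. \<Sum>s\<in>UNIV. W$s * M s d) S)
    \<longleftrightarrow> (\<forall>A B C D. S A B C D = SJ M S A B C D)"
proof -
  have e: "N4 (\<lambda>a. \<Sum>p\<in>UNIV. X$p * M p a) (\<lambda>b. \<Sum>q\<in>UNIV. Y$q * M q b) (\<lambda>c. \<Sum>r\<in>UNIV. Z$r * M r c) (\<lambda>d. \<Sum>s\<in>UNIV. W$s * M s d) S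
     = N4 (\<lambda>a. X$a) (\<lambda>b. Y$b) (\<lambda>c. Z$c) (\<lambda>d. W$d) (SJ M S)" for X Y Z W :: "real^'a"
    by (rule contrJ)
  show ?thesis
  proof
    assume H: "\<forall>X Y Z W :: real^'a. N4 (\<lambda>a. X$a) (\<lambda>b. Y$b) (\<lambda>c. Z$c) (\<lambda>d. W$d) S =
      N4 (\<lambda>a. \<Sum>p\<in>UNIV. X$p * M p a) (\<lambda>b. \<Sum>q\<in>UNIV. Y$q * M q b) (\<lambda>c. \<Sum>r\<in>UNIV. Z$r * M r c) (\<lambda>d. \<Sum>s\<in>UNIV. W$s * M s d) S"
    show "\<forall>A B C D. S A B C D = SJ M S A B C D"
    proof (intro allI)
      fix A B C D
      show "S A B C D = SJ M S A B C D"
        using H[rule_format, of "axis A 1" "axis B 1" "axis C 1" "axis D 1"]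
        unfolding e N4_axis .
    qed
  next
    assume H: "\<forall>A B C D. S A B C D = SJ M S A B C D"
    then have "SJ M S = S" by (intro ext) simp
    then show "\<forall>X Y Z W :: real^'a. N4 (\<lambda>a. X$a) (\<lambda>b. Y$b) (\<lambda>c. Z$c) (\<lambda>d. W$d) S =
      N4 (\<lambda>a. \<Sum>p\<in>UNIV. X$p * M p a) (\<lambda>b. \<Sum>q\<in>UNIV. Y$q * M q b) (\<lambda>c. \<Sum>r\<in>UNIV. Z$r * M r c) (\<lambda>d. \<Sum>s\<in>UNIV. W$s * M s d) S"
      unfolding e by simp
  qed
qed

lemma SJ_scale: "SJ M (\<lambda>a b c d. k * S a b c d) A B C D = k * SJ M S A B C D"
  unfolding SJ_def by (simp add: sum_distrib_left mult_ac)

lemma SJ_S0: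
  "SJ M (S0 G x) A B C D = N4 (\<lambda>i. M A (Some i)) (\<lambda>i. M B (Some i)) (\<lambda>i. M C (Some i)) (\<lambda>i. M D (Some i))
      (\<lambda>a b c d. S0 G x (Some a) (Some b) (Some c) (Some d))"
  unfolding SJ_def N4_def by (simp add: sum_option S0_def)


lemma pointwise:
  assumes acm: "almost_contact_metric U G phi xi" and yU: "base y \<in> U"
  shows "(\<forall>A B C D. curv (gbar G) y A B C D = SJ (Jbar G phi xi y) (curv (gbar G) y) A B C D)
    \<longleftrightarrow>
     (\<forall>i j k l.
        curv G (base y) i j k l
          - (\<Sum>a\<in>UNIV. \<Sum>b\<in>UNIV. \<Sum>c\<in>UNIV. \<Sum>d\<in>UNIV.
               phi (base y) i a * phi (base y) j b * phi (base y) k c * phi (base y) l d * curv G (base y) a b c d)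
          = G (base y) i l * eta_of G xi (base y) j * eta_of G xi (base y) k + G (base y) j k * eta_of G xi (base y) i * eta_of G xi (base y) l
            - G (base y) i k * eta_of G xi (base y) j * eta_of G xi (base y) l - G (base y) j l * eta_of G xi (base y) i * eta_of G xi (base y) k
        \<and> (\<Sum>a\<in>UNIV. \<Sum>b\<in>UNIV. \<Sum>c\<in>UNIV. \<Sum>d\<in>UNIV.
               xi (base y) a * phi (base y) j b * phi (base y) k c * phi (base y) l d * curv G (base y) a b c d) = 0
        \<and> (\<Sum>a\<in>UNIV. \<Sum>b\<in>UNIV. \<Sum>c\<in>UNIV. \<Sum>d\<in>UNIV.
               xi (base y) a * xi (base y) c * phi (base y) j b * phi (base y) l d * curv G (base y) a b c d)
            = - G (base y) j l + eta_of G xi (base y) j * eta_of G xi (base y) l)"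
proof -
  define x where "x = base y"
  have rm: "riemannian_metric U G" using acm by (simp add: almost_contact_metric_def)
  have xU: "x \<in> U" using yU x_def by simp
  have ax: "(\<forall>j k. (\<Sum>i\<in>UNIV. phi x j i * phi x i k) = - (if j = k then 1 else 0) + eta_of G xi x j * xi x k) \<and>
        (\<forall>i. (\<Sum>j\<in>UNIV. xi x j * phi x j i) = 0) \<and>
        (\<forall>j. (\<Sum>i\<in>UNIV. phi x j i * eta_of G xi x i) = 0) \<and>
        (\<Sum>i\<in>UNIV. eta_of G xi x i * xi x i) = 1 \<and>
        (\<forall>i j. (\<Sum>a\<in>UNIV. \<Sum>b\<in>UNIV. phi x i a * phi x j b * G x a b)
                 = G x i j - eta_of G xi x i * eta_of G xi x j)"
    using acm xU unfolding almost_contact_metric_def by blast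
  note al = alg[where g="G x" and xi="xi x" and eta="eta_of G xi x" and phi="phi x" and RR="curv G x",
      OF G_sym[OF rm xU]] 
  have AL: "(\<forall>A B C D.
       (case (A, B, C, D) of (Some a, Some b, Some c, Some d) \<Rightarrow>
            curv G x a b c d - G x a d * G x b c + G x a c * G x b d | _ \<Rightarrow> 0) =
       N4 (case A of None \<Rightarrow> xi x | Some j \<Rightarrow> phi x j)
        (case B of None \<Rightarrow> xi x | Some j \<Rightarrow> phi x j)
        (case C of None \<Rightarrow> xi x | Some j \<Rightarrow> phi x j)
        (case D of None \<Rightarrow> xi x | Some j \<Rightarrow> phi x j)
        (\<lambda>a b c d. curv G x a b c d - G x a d * G x b c + G x a c * G x b d)) =
   (\<forall>i j k l.
       curv G x i j k l - N4 (phi x i) (phi x j) (phi x k) (phi x l) (curv G x) =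
       G x i l * eta_of G xi x j * eta_of G xi x k + G x j k * eta_of G xi x i * eta_of G xi x l -
       G x i k * eta_of G xi x j * eta_of G xi x l - G x j l * eta_of G xi x i * eta_of G xi x k \<and>
       N4 (xi x) (phi x j) (phi x k) (phi x l) (curv G x) = 0 \<and>
       N4 (xi x) (phi x j) (xi x) (phi x l) (curv G x) = - G x j l + eta_of G xi x j * eta_of G xi x l)"
    by (rule al) (use ax in \<open>simp_all add: eta_of_def\<close>)
  define E where "E = exp (-2 * tcoord y)"
  have Epos: "E \<noteq> 0" by (simp add: E_def)
  have cg: "curv (gbar G) y = (\<lambda>A B C D. E * S0 G x A B C D)"
    using curv_gbar[OF rm yU] by (intro ext) (simp add: E_def x_def)
  have step2: "(\<forall>A B C D. curv (gbar G) y A B C D = SJ (Jbar G phi xi y) (curv (gbar G) y) A B C D)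
     \<longleftrightarrow> (\<forall>A B C D. S0 G x A B C D = SJ (Jbar G phi xi y) (S0 G x) A B C D)"
    unfolding cg SJ_scale using Epos by simp
  have JK: "(\<lambda>i. Jbar G phi xi y A (Some i)) = (case A of None \<Rightarrow> xi x | Some j \<Rightarrow> phi x j)" for A
    by (cases A) (auto simp: Jbar_def x_def)
  have S0s: "(\<lambda>a b c d. S0 G x (Some a) (Some b) (Some c) (Some d))
      = (\<lambda>a b c d. curv G x a b c d - G x a d * G x b c + G x a c * G x b d)"
    by (simp add: S0_def)
  have S0c: "S0 G x A B C D = (case (A, B, C, D) of (Some a, Some b, Some c, Some d) \<Rightarrow>
            curv G x a b c d - G x a d * G x b c + G x a c * G x b d | _ \<Rightarrow> 0)" for A B C D
    by (simp add: S0_def)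
  have step3: "(\<forall>A B C D. S0 G x A B C D = SJ (Jbar G phi xi y) (S0 G x) A B C D) \<longleftrightarrow>
    (\<forall>A B C D.
       (case (A, B, C, D) of (Some a, Some b, Some c, Some d) \<Rightarrow>
            curv G x a b c d - G x a d * G x b c + G x a c * G x b d | _ \<Rightarrow> 0) =
       N4 (case A of None \<Rightarrow> xi x | Some j \<Rightarrow> phi x j)
        (case B of None \<Rightarrow> xi x | Some j \<Rightarrow> phi x j)
        (case C of None \<Rightarrow> xi x | Some j \<Rightarrow> phi x j)
        (case D of None \<Rightarrow> xi x | Some j \<Rightarrow> phi x j)
        (\<lambda>a b c d. curv G x a b c d - G x a d * G x b c + G x a c * G x b d))"
    unfolding SJ_S0 JK S0s unfolding S0c ..
  have f3: "N4 (xi x) (phi x j) (xi x) (phi x l) (curv G x) =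
     (\<Sum>a\<in>UNIV. \<Sum>b\<in>UNIV. \<Sum>c\<in>UNIV. \<Sum>d\<in>UNIV.
               xi x a * xi x c * phi x j b * phi x l d * curv G x a b c d)" for j l
    unfolding N4_flat by (simp add: mult_ac)
  show ?thesis
    unfolding step2 step3 AL f3 unfolding N4_flat x_def ..
qed


theorem lemma3:
  fixes n :: nat
    and U :: "(real^'n) set"
    and G :: "real^'n \<Rightarrow> 'n \<Rightarrow> 'n \<Rightarrow> real"
    and phi :: "real^'n \<Rightarrow> 'n \<Rightarrow> 'n \<Rightarrow> real"
    and xi :: "real^'n \<Rightarrow> 'n \<Rightarrow> real"
  assumes "CARD('n) = 2 * n + 1"
    and "almost_contact_metric U G phi xi"
  shows "(\<forall>y\<in>Mbar U. \<forall>X Y Z W.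
            curv_vec (gbar G) y X Y Z W
            = curv_vec (gbar G) y (Jvec G phi xi y X) (Jvec G phi xi y Y)
                                   (Jvec G phi xi y Z) (Jvec G phi xi y W))
     \<longleftrightarrow>
     (\<forall>x\<in>U. \<forall>i j k l.
        curv G x i j k l
          - (\<Sum>a\<in>UNIV. \<Sum>b\<in>UNIV. \<Sum>c\<in>UNIV. \<Sum>d\<in>UNIV.
               phi x i a * phi x j b * phi x k c * phi x l d * curv G x a b c d)
          = G x i l * eta_of G xi x j * eta_of G xi x k + G x j k * eta_of G xi x i * eta_of G xi x l
            - G x i k * eta_of G xi x j * eta_of G xi x l - G x j l * eta_of G xi x i * eta_of G xi x k
        \<and> (\<Sum>a\<in>UNIV. \<Sum>b\<in>UNIV. \<Sum>c\<in>UNIV. \<Sum>d\<in>UNIV.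
               xi x a * phi x j b * phi x k c * phi x l d * curv G x a b c d) = 0
        \<and> (\<Sum>a\<in>UNIV. \<Sum>b\<in>UNIV. \<Sum>c\<in>UNIV. \<Sum>d\<in>UNIV.
               xi x a * xi x c * phi x j b * phi x l d * curv G x a b c d)
            = - G x j l + eta_of G xi x j * eta_of G xi x l)"
  (is "?L \<longleftrightarrow> (\<forall>x\<in>U. ?C x)")
proof -
  have s1: "(\<forall>X Y Z W.
            curv_vec (gbar G) y X Y Z W
            = curv_vec (gbar G) y (Jvec G phi xi y X) (Jvec G phi xi y Y)
                                   (Jvec G phi xi y Z) (Jvec G phi xi y W))
     \<longleftrightarrow> (\<forall>A B C D. curv (gbar G) y A B C D = SJ (Jbar G phi xi y) (curv (gbar G) y) A B C D)" for y
    unfolding curv_vec_N4 Jvec_def vec_lambda_beta by (rule step1)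
  have s2: "y \<in> Mbar U \<Longrightarrow> (\<forall>A B C D. curv (gbar G) y A B C D = SJ (Jbar G phi xi y) (curv (gbar G) y) A B C D)
      \<longleftrightarrow> ?C (base y)" for y
    by (rule pointwise[OF assms(2)]) (simp add: Mbar_def)
  have "?L \<longleftrightarrow> (\<forall>y\<in>Mbar U. ?C (base y))"
    using s1 s2 by auto
  also have "\<dots> \<longleftrightarrow> (\<forall>x\<in>U. ?C x)"
  proof
    assume H: "\<forall>y\<in>Mbar U. ?C (base y)"
    show "\<forall>x\<in>U. ?C x"
    proof
      fix x assume xU: "x \<in> U"
      define y :: "real^('n option)" where "y = (\<chi> P. case P of Some i \<Rightarrow> x$i | None \<Rightarrow> 0)"
      have "base y = x" by (simp add: y_def base_def vec_eq_iff)
      then show "?C x" using H xU by (auto simp: Mbar_def)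
    qed
  next
    assume "\<forall>x\<in>U. ?C x"
    then show "\<forall>y\<in>Mbar U. ?C (base y)" by (simp add: Mbar_def)
  qed
  finally show ?thesis .
qed

end
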